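(* Let $k\ge2$ and $n'\ge1$. For every proper coloring of $G^*$ using at most $2k-2$ colors, either every gadget $A_1,\dots,A_{n'}$ is row-colorful or every gadget $A_1,\dots,A_{n'}$ is column-colorful (with respect to the restriction of the coloring to the gadget).
   Context: For integers $k\ge2$ and $n'\ge1$, the graph $G^*$ has node set $[n']\times[k]\times[k]$, and two nodes $(\ell,i,j)$ and $(\ell',i',j')$ are adjacent iff $|\ell-\ell'|\le 1$, $i\ne i'$ and $j\ne j'$. For $\ell\in[n']$, the gadget $A_\ell$ is the subgraph induced by $\{\ell\}\times[k]\times[k]$; its $i$-th row is $\{(\ell,i,j):j\in[k]\}$ and its $j$-th column is $\{(\ell,i,j):i\in[k]\}$. Given a proper coloring, a row (resp. column) of a gadget is colorful if its $k$ nodes receive pairwise distinct colors; a gadget is row-colorful if it has a colorful row and column-colorful if it has a colorful column. *)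

theory Defs
  imports Main
begin

definition gstar_nodes :: "nat \<Rightarrow> nat \<Rightarrow> (nat \<times> nat \<times> nat) set" where
  "gstar_nodes n' k = {1..n'} \<times> {1..k} \<times> {1..k}"

definition gstar_adj :: "nat \<times> nat \<times> nat \<Rightarrow> nat \<times> nat \<times> nat \<Rightarrow> bool" where
  "gstar_adj u v = (case u of (l, i, j) \<Rightarrow> case v of (l', i', j') \<Rightarrow>
      (l \<le> l' + 1 \<and> l' \<le> l + 1) \<and> i \<noteq> i' \<and> j \<noteq> j')"

definition proper_coloring :: "nat \<Rightarrow> nat \<Rightarrow> (nat \<times> nat \<times> nat \<Rightarrow> 'c) \<Rightarrow> bool" where
  "proper_coloring n' k c = (\<forall>u\<in>gstar_nodes n' k. \<forall>v\<in>gstar_nodes n' k.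
      gstar_adj u v \<longrightarrow> c u \<noteq> c v)"

definition row_colorful_row :: "nat \<Rightarrow> (nat \<times> nat \<times> nat \<Rightarrow> 'c) \<Rightarrow> nat \<Rightarrow> nat \<Rightarrow> bool" where
  "row_colorful_row k c l i = inj_on (\<lambda>j. c (l, i, j)) {1..k}"

definition col_colorful_col :: "nat \<Rightarrow> (nat \<times> nat \<times> nat \<Rightarrow> 'c) \<Rightarrow> nat \<Rightarrow> nat \<Rightarrow> bool" where
  "col_colorful_col k c l j = inj_on (\<lambda>i. c (l, i, j)) {1..k}"

definition row_colorful :: "nat \<Rightarrow> (nat \<times> nat \<times> nat \<Rightarrow> 'c) \<Rightarrow> nat \<Rightarrow> bool" where
  "row_colorful k c l = (\<exists>i\<in>{1..k}. row_colorful_row k c l i)"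

definition column_colorful :: "nat \<Rightarrow> (nat \<times> nat \<times> nat \<Rightarrow> 'c) \<Rightarrow> nat \<Rightarrow> bool" where
  "column_colorful k c l = (\<exists>j\<in>{1..k}. col_colorful_col k c l j)"

end

theory Submission
  imports Defs
begin

lemma F:
  assumes pc: "proper_coloring n' k c"
    and u1: "(l,i,ja) \<in> gstar_nodes n' k" and u2: "(l,i,jb) \<in> gstar_nodes n' k"
    and ne: "ja \<noteq> jb" and eq: "c (l,i,ja) = c (l,i,jb)"
    and v: "(l',i',j') \<in> gstar_nodes n' k" and d1: "l \<le> l'+1" and d2: "l' \<le> l+1"
    and cv: "c (l',i',j') = c (l,i,ja)"
  shows "i' = i"
proof (rule ccontr)
  assume ni: "i' \<noteq> i"
  show False
  proof (cases "j' = ja")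
    case True
    then have "gstar_adj (l,i,jb) (l',i',j')" using ni ne d1 d2 unfolding gstar_adj_def by auto
    then show False using pc u2 v cv eq unfolding proper_coloring_def by force
  next
    case False
    then have "gstar_adj (l,i,ja) (l',i',j')" using ni d1 d2 unfolding gstar_adj_def by auto
    then show False using pc u1 v cv unfolding proper_coloring_def by force
  qed
qed

lemma F':
  assumes pc: "proper_coloring n' k c"
    and u1: "(l,ia,j) \<in> gstar_nodes n' k" and u2: "(l,ib,j) \<in> gstar_nodes n' k"
    and ne: "ia \<noteq> ib" and eq: "c (l,ia,j) = c (l,ib,j)"
    and v: "(l',i',j') \<in> gstar_nodes n' k" and d1: "l \<le> l'+1" and d2: "l' \<le> l+1"
    and cv: "c (l',i',j') = c (l,ia,j)"
  shows "j' = j"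
proof (rule ccontr)
  assume ni: "j' \<noteq> j"
  show False
  proof (cases "i' = ia")
    case True
    then have "gstar_adj (l,ib,j) (l',i',j')" using ni ne d1 d2 unfolding gstar_adj_def by auto
    then show False using pc u2 v cv eq unfolding proper_coloring_def by force
  next
    case False
    then have "gstar_adj (l,ia,j) (l',i',j')" using ni d1 d2 unfolding gstar_adj_def by auto
    then show False using pc u1 v cv unfolding proper_coloring_def by force
  qed
qed

lemma mem_nodes: "(l,i,j) \<in> gstar_nodes n' k \<longleftrightarrow> l \<in> {1..n'} \<and> i \<in> {1..k} \<and> j \<in> {1..k}"
  unfolding gstar_nodes_def by auto

lemma rowset:
  assumes pc: "proper_coloring n' k c" and m: "m \<in> {1..n'}"
    and nr: "\<not> row_colorful k c m"
  obtains a b where "\<forall>i\<in>{1..k}. a i \<in> {1..k} \<and> b i \<in> {1..k} \<and> a i \<noteq> b i \<and> c (m,i,a i) = c (m,i,b i)"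
    and "inj_on (\<lambda>i. c (m,i,a i)) {1..k}"
proof -
  have "\<forall>i\<in>{1..k}. \<exists>j1. \<exists>j2. j1 \<in> {1..k} \<and> j2 \<in> {1..k} \<and> j1 \<noteq> j2 \<and> c (m,i,j1) = c (m,i,j2)"
    using nr unfolding row_colorful_def row_colorful_row_def inj_on_def by blast
  then obtain a where "\<forall>i\<in>{1..k}. \<exists>j2. a i \<in> {1..k} \<and> j2 \<in> {1..k} \<and> a i \<noteq> j2 \<and> c (m,i,a i) = c (m,i,j2)"
    by (metis bchoice)
  then obtain b where ab: "\<forall>i\<in>{1..k}. a i \<in> {1..k} \<and> b i \<in> {1..k} \<and> a i \<noteq> b i \<and> c (m,i,a i) = c (m,i,b i)"
    by (metis bchoice)
  have "inj_on (\<lambda>i. c (m,i,a i)) {1..k}"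
  proof (rule inj_onI)
    fix x y assume x: "x \<in> {1..k}" and y: "y \<in> {1..k}" and e: "c (m,x,a x) = c (m,y,a y)"
    show "x = y"
    proof -
      have h: "(m,x,a x) \<in> gstar_nodes n' k" "(m,x,b x) \<in> gstar_nodes n' k" "a x \<noteq> b x"
        "c (m,x,a x) = c (m,x,b x)" "(m,y,a y) \<in> gstar_nodes n' k"
        using ab x y m by (auto simp: mem_nodes)
      have "y = x" by (rule F[OF pc h(1-5)]) (use e in auto)
      then show ?thesis by simp
    qed
  qed
  then show ?thesis using that ab by blast
qed

lemma step:
  assumes pc: "proper_coloring n' k c" and m: "m \<in> {1..n'}"
    and nr: "\<not> row_colorful k c m"
    and cardS: "card (c ` gstar_nodes n' k) \<le> 2 * k - 2" and k2: "k \<ge> 2"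
    and l: "l \<in> {1..n'}" and d1: "m \<le> l+1" and d2: "l \<le> m+1"
  shows "\<not> row_colorful k c l"
proof
  assume "row_colorful k c l"
  then obtain i where i: "i \<in> {1..k}" and inj: "inj_on (\<lambda>j. c (l,i,j)) {1..k}"
    unfolding row_colorful_def row_colorful_row_def by blast
  obtain a b where ab: "\<forall>i\<in>{1..k}. a i \<in> {1..k} \<and> b i \<in> {1..k} \<and> a i \<noteq> b i \<and> c (m,i,a i) = c (m,i,b i)"
    and injr: "inj_on (\<lambda>i. c (m,i,a i)) {1..k}"
    using rowset[OF pc m nr] by blast
  define R where "R = (\<lambda>i. c (m,i,a i)) ` {1..k}"
  define T where "T = (\<lambda>j. c (l,i,j)) ` {1..k}"
  define S where "S = c ` gstar_nodes n' k"
  have finS: "finite S" unfolding S_def gstar_nodes_def by auto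
  have cR: "card R = k" unfolding R_def using card_image[OF injr] by simp
  have cT: "card T = k" unfolding T_def using card_image[OF inj] by simp
  have RS: "R \<subseteq> S" unfolding R_def S_def using ab m by (auto simp: mem_nodes)
  have TS: "T \<subseteq> S" unfolding T_def S_def using i l by (auto simp: mem_nodes)
  have TR: "T \<inter> R \<subseteq> {c (m,i,a i)}"
  proof
    fix x assume "x \<in> T \<inter> R"
    then obtain j i' where j: "j \<in> {1..k}" and i': "i' \<in> {1..k}" and xj: "x = c (l,i,j)"
      and xi: "x = c (m,i',a i')" unfolding T_def R_def by blast
    have "i = i'"
      by (rule F[OF pc _ _ _ _ _ _ _, of m i' "a i'" "b i'" l i j]) (use ab i' j i l m d1 d2 xj xi in \<open>auto simp: mem_nodes\<close>)
    then show "x \<in> {c (m,i,a i)}" using xi by simp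
  qed
  have "card T \<le> card (T - R) + card (T \<inter> R)"
    by (metis card_Un_le Un_Diff_Int)
  moreover have "card (T \<inter> R) \<le> 1" using card_mono[OF _ TR] by simp
  ultimately have "card (T - R) \<ge> k - 1" using cT by linarith
  moreover have "card (R \<union> (T - R)) = card R + card (T - R)"
    using finite_subset[OF RS finS] finite_subset[OF TS finS] by (intro card_Un_disjoint) auto
  moreover have "card (R \<union> (T - R)) \<le> card S"
    by (rule card_mono[OF finS]) (use RS TS in auto)
  ultimately show False using cR cardS k2 unfolding S_def by linarith
qed

lemma colpart:
  assumes pc: "proper_coloring n' k c" and m: "m \<in> {1..n'}"
    and nr: "\<not> row_colorful k c m"
    and cardS: "card (c ` gstar_nodes n' k) \<le> 2 * k - 2" and k2: "k \<ge> 2"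
  shows "column_colorful k c m"
proof (rule ccontr)
  assume nc: "\<not> column_colorful k c m"
  obtain a b where ab: "\<forall>i\<in>{1..k}. a i \<in> {1..k} \<and> b i \<in> {1..k} \<and> a i \<noteq> b i \<and> c (m,i,a i) = c (m,i,b i)"
    and injr: "inj_on (\<lambda>i. c (m,i,a i)) {1..k}"
    using rowset[OF pc m nr] by blast
  have "\<forall>j\<in>{1..k}. \<exists>i1. \<exists>i2. i1 \<in> {1..k} \<and> i2 \<in> {1..k} \<and> i1 \<noteq> i2 \<and> c (m,i1,j) = c (m,i2,j)"
    using nc unfolding column_colorful_def col_colorful_col_def inj_on_def by blast
  then obtain p where "\<forall>j\<in>{1..k}. \<exists>i2. p j \<in> {1..k} \<and> i2 \<in> {1..k} \<and> p j \<noteq> i2 \<and> c (m,p j,j) = c (m,i2,j)"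
    by (metis bchoice)
  then obtain q where pq: "\<forall>j\<in>{1..k}. p j \<in> {1..k} \<and> q j \<in> {1..k} \<and> p j \<noteq> q j \<and> c (m,p j,j) = c (m,q j,j)"
    by (metis bchoice)
  have injo: "inj_on (\<lambda>j. c (m,p j,j)) {1..k}"
  proof (rule inj_onI)
    fix x y assume x: "x \<in> {1..k}" and y: "y \<in> {1..k}" and e: "c (m,p x,x) = c (m,p y,y)"
    show "x = y"
    proof -
      have h: "(m,p x,x) \<in> gstar_nodes n' k" "(m,q x,x) \<in> gstar_nodes n' k" "p x \<noteq> q x"
        "c (m,p x,x) = c (m,q x,x)" "(m,p y,y) \<in> gstar_nodes n' k"
        using pq x y m by (auto simp: mem_nodes)
      have "y = x" by (rule F'[OF pc h(1-5)]) (use e in auto)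
      then show ?thesis by simp
    qed
  qed
  define R where "R = (\<lambda>i. c (m,i,a i)) ` {1..k}"
  define Oc where "Oc = (\<lambda>j. c (m,p j,j)) ` {1..k}"
  define S where "S = c ` gstar_nodes n' k"
  have finS: "finite S" unfolding S_def gstar_nodes_def by auto
  have cR: "card R = k" unfolding R_def using card_image[OF injr] by simp
  have cOc: "card Oc = k" unfolding Oc_def using card_image[OF injo] by simp
  have RS: "R \<subseteq> S" unfolding R_def S_def using ab m by (auto simp: mem_nodes)
  have OcS: "Oc \<subseteq> S" unfolding Oc_def S_def using pq m by (auto simp: mem_nodes)
  have disj: "R \<inter> Oc = {}"
  proof (rule ccontr)
    assume "R \<inter> Oc \<noteq> {}"
    then obtain i j where i: "i \<in> {1..k}" and j: "j \<in> {1..k}" and e: "c (m,i,a i) = c (m,p j,j)"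
      unfolding R_def Oc_def by blast
    have 1: "p j = i"
      by (rule F[OF pc _ _ _ _ _ _ _, of m i "a i" "b i" m "p j" j]) (use ab pq i j m e in \<open>auto simp: mem_nodes\<close>)
    have 2: "q j = i"
      by (rule F[OF pc _ _ _ _ _ _ _, of m i "a i" "b i" m "q j" j]) (use ab pq i j m e in \<open>auto simp: mem_nodes\<close>)
    have "p j \<noteq> q j" using pq j by blast
    then show False using 1 2 by simp
  qed
  have "card (R \<union> Oc) = card R + card Oc"
    using finite_subset[OF RS finS] finite_subset[OF OcS finS] disj by (simp add: card_Un_disjoint)
  moreover have "card (R \<union> Oc) \<le> card S"
    by (rule card_mono[OF finS]) (use RS OcS in auto)
  ultimately show False using cR cOc cardS k2 unfolding S_def by linarith
qed

theorem mainTheorem15: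
  fixes n' k :: nat and c :: "nat \<times> nat \<times> nat \<Rightarrow> 'c"
  assumes "k \<ge> 2" and "n' \<ge> 1"
    and "proper_coloring n' k c"
    and "card (c ` gstar_nodes n' k) \<le> 2 * k - 2"
  shows "(\<forall>l\<in>{1..n'}. row_colorful k c l) \<or> (\<forall>l\<in>{1..n'}. column_colorful k c l)"
proof (cases "\<forall>l\<in>{1..n'}. row_colorful k c l")
  case True
  then show ?thesis by simp
next
  case False
  then obtain m where m: "m \<in> {1..n'}" and nr: "\<not> row_colorful k c m" by blast
  have up: "m + d \<le> n' \<longrightarrow> \<not> row_colorful k c (m + d)" for d
  proof (induction d)
    case 0 then show ?case using nr by simp
  next
    case (Suc d)
    show ?case
    proof
      assume "m + Suc d \<le> n'"
      then show "\<not> row_colorful k c (m + Suc d)"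
        using step[OF assms(3), of "m+d" "m + Suc d"] Suc m assms(1,4) by auto
    qed
  qed
  have down: "d < m \<longrightarrow> \<not> row_colorful k c (m - d)" for d
  proof (induction d)
    case 0 then show ?case using nr by simp
  next
    case (Suc d)
    show ?case
    proof
      assume sd: "Suc d < m"
      have "m - d \<in> {1..n'}" "m - Suc d \<in> {1..n'}" "m - d \<le> (m - Suc d) + 1" "m - Suc d \<le> (m - d) + 1"
        using sd m by auto
      then show "\<not> row_colorful k c (m - Suc d)"
        using step[OF assms(3), of "m-d" "m - Suc d"] Suc sd assms(1,4) by auto
    qed
  qed
  have "\<forall>l\<in>{1..n'}. \<not> row_colorful k c l"
  proof
    fix l assume l: "l \<in> {1..n'}"
    show "\<not> row_colorful k c l"
    proof (cases "m \<le> l")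
      case True then show ?thesis using up[of "l - m"] l by auto
    next
      case False then show ?thesis using down[of "m - l"] l m by auto
    qed
  qed
  then show ?thesis using colpart[OF assms(3) _ _ assms(4,1)] by blast
qed

end
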